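(* Let $n\ge 1$, $\sigma>0$, $\lambda>0$, covariates $X=(X_1,\dots,X_n)\in[0,1]^n$ and responses $\mathbf y\in\mathbb R^n$ be given. Let $K:[0,1]^2\to\mathbb R$ be a continuous, symmetric, positive definite kernel with $K\in C^2([0,1]\times[0,1])$, and suppose $\widehat\sigma^2_{f'}(x)>0$ for every $x\in[0,1]$. Then there is a constant $C$ not depending on $t$ such that for all $t\in[0,1]$, $$\ell(t)=C\,\frac{1}{\sqrt{\widehat\sigma^2_{f'}(t)/K_{11}(t,t)}}\exp\Big\{-\frac{\widehat\mu_{f'}(t)^2}{2\widehat\sigma^2_{f'}(t)}\Big\}.$$ Consequently, for a prior density $\pi(t)$ on $[0,1]$, the posterior density of $t$ satisfies $$\pi_n(t\mid X,\mathbf y)\propto \frac{1}{\sqrt{\widehat\sigma^2_{f'}(t)/K_{11}(t,t)}}\exp\Big(-\frac{\widehat\mu_{f'}(t)^2}{2\widehat\sigma^2_{f'}(t)}\Big)\pi(t).$$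
   Context: Notation: $K_{jl}(x,x')=\partial^{j+l}K(x,x')/\partial x^j\partial x'^l$; $K(X,X)=(K(X_i,X_j))_{i,j=1}^n$; $K_{10}(x,X)=(K_{10}(x,X_1),\dots,K_{10}(x,X_n))$ (row vector) and $K_{01}(X,x)=K_{10}(x,X)^T$; $I_n$ is the $n\times n$ identity. Define $\widehat\mu_{f'}(x)=K_{10}(x,X)[K(X,X)+n\lambda I_n]^{-1}\mathbf y$ and $\widehat\sigma^2_{f'}(x)=\sigma^2(n\lambda)^{-1}\{K_{11}(x,x)-K_{10}(x,X)[K(X,X)+n\lambda I_n]^{-1}K_{01}(X,x)\}$ (posterior mean and variance of $f'$ under the unconstrained prior $f\sim \mathrm{GP}(0,\sigma^2(n\lambda)^{-1}K)$ in the model $y_i=f(X_i)+\epsilon_i$, $\epsilon_i\sim N(0,\sigma^2)$ i.i.d.). Constrained prior: given $t\in[0,1]$, $f\sim\mathrm{GP}(0,k_t)$ with $k_t(x,x')=\sigma^2(n\lambda)^{-1}\{K(x,x')-K_{01}(x,t)K_{11}(t,t)^{-1}K_{10}(t,x')\}$ (the GP conditioned on $f'(t)=0$), and $t\sim\pi$. Integrating out $f$ gives $\mathbf y\mid X,t\sim N(0,\Sigma_t)$ with $\Sigma_t=\sigma^2(n\lambda)^{-1}\{K(X,X)-K_{01}(X,t)K_{11}(t,t)^{-1}K_{10}(t,X)\}+\sigma^2 I_n$; the marginal likelihood $\ell(t)$ is the $N(0,\Sigma_t)$ density evaluated at $\mathbf y$, and $\pi_n(t\mid X,\mathbf y)\propto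 \ell(t)\pi(t)$. *)

theory Defs
  imports "HOL-Analysis.Analysis"
begin

definition pd1 :: "(real \<Rightarrow> real \<Rightarrow> real) \<Rightarrow> real \<Rightarrow> real \<Rightarrow> real" where
  "pd1 K x x' = (THE D. ((\<lambda>s. K s x') has_real_derivative D) (at x within {0..1}))"

definition pd2 :: "(real \<Rightarrow> real \<Rightarrow> real) \<Rightarrow> real \<Rightarrow> real \<Rightarrow> real" where
  "pd2 K x x' = (THE D. ((\<lambda>s. K x s) has_real_derivative D) (at x' within {0..1}))"

abbreviation K10 where "K10 K \<equiv> pd1 K"
abbreviation K01 where "K01 K \<equiv> pd2 K"
abbreviation K11 where "K11 K \<equiv> pd2 (pd1 K)"

definition partials_exist_on_square :: "(real \<Rightarrow> real \<Rightarrow> real) \<Rightarrow> bool" where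
  "partials_exist_on_square F \<longleftrightarrow>
     (\<forall>x\<in>{0..1}. \<forall>x'\<in>{0..1}.
        ((\<lambda>s. F s x') has_real_derivative pd1 F x x') (at x within {0..1}) \<and>
        ((\<lambda>s. F x s) has_real_derivative pd2 F x x') (at x' within {0..1}))"

definition cont_on_square :: "(real \<Rightarrow> real \<Rightarrow> real) \<Rightarrow> bool" where
  "cont_on_square F \<longleftrightarrow> continuous_on ({0..1} \<times> {0..1}) (\<lambda>(x, x'). F x x')"

definition C2_square :: "(real \<Rightarrow> real \<Rightarrow> real) \<Rightarrow> bool" where
  "C2_square K \<longleftrightarrow>
     partials_exist_on_square K \<and> partials_exist_on_square (pd1 K) \<and>
     partials_exist_on_square (pd2 K) \<and>
     cont_on_square K \<and> cont_on_square (pd1 K) \<and> cont_on_square (pd2 K) \<and>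
     cont_on_square (pd1 (pd1 K)) \<and> cont_on_square (pd2 (pd1 K)) \<and>
     cont_on_square (pd1 (pd2 K)) \<and> cont_on_square (pd2 (pd2 K))"

definition symmetric_kernel :: "(real \<Rightarrow> real \<Rightarrow> real) \<Rightarrow> bool" where
  "symmetric_kernel K \<longleftrightarrow> (\<forall>x\<in>{0..1}. \<forall>x'\<in>{0..1}. K x x' = K x' x)"

text \<open>Positive definite kernel (in the RKHS sense): every Gram matrix on [0,1]
 is positive semidefinite.\<close>
definition pos_def_kernel :: "(real \<Rightarrow> real \<Rightarrow> real) \<Rightarrow> bool" where
  "pos_def_kernel K \<longleftrightarrow>
     (\<forall>(m::nat) (p::nat \<Rightarrow> real) (c::nat \<Rightarrow> real). (\<forall>i<m. p i \<in> {0..1}) \<longrightarrow>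
        0 \<le> (\<Sum>i<m. \<Sum>j<m. c i * c j * K (p i) (p j)))"

definition gram :: "(real \<Rightarrow> real \<Rightarrow> real) \<Rightarrow> real^'n \<Rightarrow> real^'n^'n" where
  "gram K X = (\<chi> i j. K (X$i) (X$j))"

definition regmat :: "(real \<Rightarrow> real \<Rightarrow> real) \<Rightarrow> real \<Rightarrow> real^'n \<Rightarrow> real^'n^'n" where
  "regmat K lam X = gram K X + (real CARD('n) * lam) *\<^sub>R mat 1"

definition K10_vec :: "(real \<Rightarrow> real \<Rightarrow> real) \<Rightarrow> real \<Rightarrow> real^'n \<Rightarrow> real^'n" where
  "K10_vec K x X = (\<chi> i. K10 K x (X$i))"

definition mu_hat :: "(real \<Rightarrow> real \<Rightarrow> real) \<Rightarrow> real \<Rightarrow> real^'n \<Rightarrow> real^'n \<Rightarrow> real \<Rightarrow> real" where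
  "mu_hat K lam X y x = K10_vec K x X \<bullet> (matrix_inv (regmat K lam X) *v y)"

definition sigma2_hat :: "(real \<Rightarrow> real \<Rightarrow> real) \<Rightarrow> real \<Rightarrow> real \<Rightarrow> real^'n \<Rightarrow> real \<Rightarrow> real" where
  "sigma2_hat K \<sigma> lam X x = \<sigma>\<^sup>2 / (real CARD('n) * lam) *
      (K11 K x x - K10_vec K x X \<bullet> (matrix_inv (regmat K lam X) *v K10_vec K x X))"

text \<open>Marginal covariance Sigma_t of y given X and t.\<close>
definition Sigma_t :: "(real \<Rightarrow> real \<Rightarrow> real) \<Rightarrow> real \<Rightarrow> real \<Rightarrow> real^'n \<Rightarrow> real \<Rightarrow> real^'n^'n" where
  "Sigma_t K \<sigma> lam X t = (\<chi> i j. \<sigma>\<^sup>2 / (real CARD('n) * lam) *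
       (K (X$i) (X$j) - K01 K (X$i) t * K10 K t (X$j) / K11 K t t)
       + (if i = j then \<sigma>\<^sup>2 else 0))"

definition mvn_density :: "real^'n^'n \<Rightarrow> real^'n \<Rightarrow> real" where
  "mvn_density S y = exp (- (y \<bullet> (matrix_inv S *v y)) / 2) / sqrt ((2 * pi) ^ CARD('n) * det S)"

definition marg_lik :: "(real \<Rightarrow> real \<Rightarrow> real) \<Rightarrow> real \<Rightarrow> real \<Rightarrow> real^'n \<Rightarrow> real^'n \<Rightarrow> real \<Rightarrow> real" where
  "marg_lik K \<sigma> lam X y t = mvn_density (Sigma_t K \<sigma> lam X t) y"

definition posterior :: "(real \<Rightarrow> real \<Rightarrow> real) \<Rightarrow> real \<Rightarrow> real \<Rightarrow> real^'n \<Rightarrow> real^'n \<Rightarrow> (real \<Rightarrow> real) \<Rightarrow> real \<Rightarrow> real" where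
  "posterior K \<sigma> lam X y \<pi> t =
     marg_lik K \<sigma> lam X y t * \<pi> t / integral {0..1} (\<lambda>s. marg_lik K \<sigma> lam X y s * \<pi> s)"

end

theory Submission
  imports Defs
begin


lemma row_mat1: "row i (mat 1 :: real^'n^'n) = axis i 1"
  by (auto simp: row_def mat_def axis_def vec_eq_iff)

lemma sum_axis_vec: "(\<Sum>i\<in>UNIV. (x::real^'n)$i *s axis i 1) = x"
  by (auto simp: vec_eq_iff sum_component axis_def if_distrib cong: if_cong)

lemma det_row_replace_id:
  "det (\<chi> i. if i = k then (x::real^'n) else axis i 1) = x$k"
proof -
  have "det ((\<chi> i. if i = k then sum (\<lambda>i. x$i *s row i (mat 1)) (UNIV::'n set)
                             else row i (mat 1))::real^'n^'n) = x$k * det (mat 1::real^'n^'n)"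
    by (rule cramer_lemma_transpose)
  then show ?thesis unfolding row_mat1 sum_axis_vec by simp
qed

lemma det_inner_ind:
  fixes v :: "real^'n"
  assumes "finite T" "k \<notin> T"
  shows "det (\<chi> i. if i = k then v else if i \<in> T then axis i 1 + c i *s v else axis i 1) = v$k"
  using assms
proof (induction T rule: finite_induct)
  case empty
  have "(\<chi> i. if i = k then v else if i \<in> {} then axis i 1 + c i *s v else axis i 1) = (\<chi> i. if i = k then v else axis i (1::real))"
    by (simp only: empty_iff if_False)
  then show ?case using det_row_replace_id[of k v] by simp
next
  case (insert j T)
  define A where "A = (\<chi> i. if i = k then v else if i \<in> T then axis i 1 + c i *s v else axis i 1)"
  have jk: "j \<noteq> k" using insert by auto
  have rA: "row m A = (if m = k then v else if m \<in> T then axis m 1 + c m *s v else axis m 1)" for m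
    by (simp add: A_def row_def vec_lambda_eta)
  have sp: "c j *s v \<in> vec.span {row m A |m. m \<noteq> j}"
    using jk rA[of k] by (metis (mono_tags, lifting) mem_Collect_eq vec.span_base vec.span_scale)
  have eq: "(\<chi> i. if i = k then v else if i \<in> insert j T then axis i 1 + c i *s v else axis i 1)
     = (\<chi> m. if m = j then row j A + c j *s v else row m A)"
    using insert jk by (auto simp: rA vec_eq_iff)
  show ?case unfolding eq det_row_span[OF sp] using insert by (simp add: A_def)
qed

lemma det_outer_ind:
  fixes v :: "real^'n"
  assumes "finite T"
  shows "det (\<chi> i. if i \<in> T then axis i 1 + c i *s v else axis i 1) = 1 + (\<Sum>i\<in>T. c i * v$i)"
  using assms
proof (induction T rule: finite_induct)
  case empty
  have "(\<chi> i. axis i (1::real)) = (mat 1 :: real^'n^'n)"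
    by (auto simp: vec_eq_iff axis_def mat_def)
  then show ?case by simp
next
  case (insert k T)
  define B where "B = (\<lambda>i. if i \<in> T then axis i 1 + c i *s v else axis i (1::real))"
  have e1: "(\<chi> i. if i \<in> insert k T then axis i 1 + c i *s v else axis i 1)
     = (\<chi> i. if i = k then axis k 1 + c k *s v else B i)"
    by (auto simp: B_def vec_eq_iff)
  have e2: "(\<chi> i. if i = k then axis k 1 else B i) = (\<chi> i. if i \<in> T then axis i 1 + c i *s v else axis i (1::real))"
    using insert(2) by (auto simp: B_def vec_eq_iff)
  have e3: "(\<chi> i. if i = k then v else B i) = (\<chi> i. if i = k then v else if i \<in> T then axis i 1 + c i *s v else axis i (1::real))"
    by (auto simp: B_def vec_eq_iff)
  have "det (\<chi> i. if i = k then axis k 1 + c k *s v else B i)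
      = det (\<chi> i. if i = k then axis k 1 else B i) + c k * det (\<chi> i. if i = k then v else B i)"
    using det_row_add[of k "\<lambda>i. axis k 1" "\<lambda>i. c k *s v" B] det_row_mul[of k "c k" "\<lambda>i. v" B]
    by (simp only:)
  also have "\<dots> = 1 + (\<Sum>i\<in>T. c i * v$i) + c k * v$k"
    unfolding e2 e3 det_inner_ind[OF insert(1,2)] insert(3) ..
  finally show ?case unfolding e1 using insert(1,2) by simp
qed

lemma det_rank_one:
  fixes w v :: "real^'n"
  shows "det (mat 1 + (\<chi> i j. w$i * v$j)) = 1 + v \<bullet> w"
proof -
  have "mat 1 + (\<chi> i j. w$i * v$j) = (\<chi> i. if i \<in> UNIV then axis i 1 + w$i *s v else axis i 1)"
    by (auto simp: vec_eq_iff axis_def mat_def)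
  then show ?thesis using det_outer_ind[of UNIV "\<lambda>i. w$i" v]
    by (simp add: inner_vec_def mult.commute)
qed



definition PD :: "real^'n^'n \<Rightarrow> bool" where
  "PD A \<longleftrightarrow> (\<forall>x. x \<noteq> 0 \<longrightarrow> 0 < x \<bullet> (A *v x))"

definition symm :: "real^'n^'n \<Rightarrow> bool" where
  "symm A \<longleftrightarrow> (\<forall>i j. A$i$j = A$j$i)"

lemma PD_invertible: assumes "PD A" shows "invertible A"
proof -
  have "inj ((*v) A)" unfolding vec.inj_iff_eq_0
  proof (intro allI impI)
    fix x assume "A *v x = 0"
    then show "x = 0" using assms unfolding PD_def by fastforce
  qed
  then show ?thesis by (simp add: invertible_left_inverse matrix_left_invertible_injective)
qed

lemma inv_props:
  assumes "invertible (A::real^'n^'n)"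
  shows "A ** matrix_inv A = mat 1" "matrix_inv A ** A = mat 1"
proof -
  from assms obtain B where "A ** B = mat 1 \<and> B ** A = mat 1" unfolding invertible_def by blast
  then have "A ** matrix_inv A = mat 1 \<and> matrix_inv A ** A = mat 1"
    unfolding matrix_inv_def by (rule someI)
  then show "A ** matrix_inv A = mat 1" "matrix_inv A ** A = mat 1" by auto
qed

lemma inv_vec:
  assumes "invertible (A::real^'n^'n)"
  shows "A *v (matrix_inv A *v x) = x" "matrix_inv A *v (A *v x) = x"
  using inv_props[OF assms] by (simp_all add: matrix_vector_mul_assoc)

lemma symm_dot: assumes "symm A" shows "(A *v p) \<bullet> r = p \<bullet> (A *v r)"
proof -
  have "transpose A = A" using assms by (auto simp: symm_def transpose_def vec_eq_iff)
  then have "A *v p = p v* A" by (metis transpose_matrix_vector)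
  then show ?thesis by (simp add: dot_lmul_matrix)
qed

lemma symm_inv_dot:
  assumes "symm A" "invertible A"
  shows "u \<bullet> (matrix_inv A *v v) = (matrix_inv A *v u) \<bullet> v"
proof -
  define p r where "p = matrix_inv A *v u" "r = matrix_inv A *v v"
  have "u = A *v p" "v = A *v r" using inv_vec[OF assms(2)] p_r_def by auto
  then show ?thesis using symm_dot[OF assms(1)] p_r_def by metis
qed

lemma PD_quad_nonneg: assumes "PD A" shows "0 \<le> x \<bullet> (A *v x)"
  using assms unfolding PD_def by (cases "x = 0") (auto intro: less_imp_le)

lemma det_scaleR: "det (a *\<^sub>R (A::real^'n^'n)) = a ^ CARD('n) * det A"
proof -
  have "a *\<^sub>R A = (\<chi> i. a *s (\<chi> j. A$i$j))" by (auto simp: vec_eq_iff)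
  then show ?thesis using det_rows_mul[of "\<lambda>i. a" "\<lambda>i. (\<chi> j. A$i$j)"]
    by (simp add: vec_lambda_eta)
qed

lemma PD_det_pos: fixes A :: "real^'n^'n" assumes "PD A" shows "0 < det A"
proof (rule ccontr)
  assume "\<not> 0 < det A"
  define f where "f s = det (s *\<^sub>R A + (1 - s) *\<^sub>R mat 1)" for s :: real
  have cont: "continuous_on {0..1} f"
    unfolding f_def det_def by (intro continuous_intros) 
  have f0: "f 0 = 1" by (simp add: f_def)
  have f1: "f 1 \<le> 0" using \<open>\<not> 0 < det A\<close> by (simp add: f_def)
  obtain s where s: "0 \<le> s" "s \<le> 1" "f s = 0"
  proof -
    have "\<exists>x\<ge>0. x \<le> 1 \<and> f x = 0" by (rule IVT2') (use cont f0 f1 in auto)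
    then show ?thesis using that by auto
  qed
  have "PD (s *\<^sub>R A + (1 - s) *\<^sub>R mat 1)"
    unfolding PD_def
  proof (intro allI impI)
    fix x :: "real^'n" assume "x \<noteq> 0"
    have "x \<bullet> ((s *\<^sub>R A + (1 - s) *\<^sub>R mat 1) *v x) = s * (x \<bullet> (A *v x)) + (1 - s) * (x \<bullet> x)"
      by (simp add: matrix_vector_mult_add_rdistrib inner_add_right
           flip: scaleR_matrix_vector_assoc)
    moreover have "0 \<le> s * (x \<bullet> (A *v x))" using s PD_quad_nonneg[OF assms] by simp
    moreover have "0 < x \<bullet> (A *v x)" using assms \<open>x \<noteq> 0\<close> unfolding PD_def by auto
    moreover have "0 < x \<bullet> x" using \<open>x \<noteq> 0\<close> by simp
    ultimately show "0 < x \<bullet> ((s *\<^sub>R A + (1 - s) *\<^sub>R mat 1) *v x)"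
      using s by (cases "s = 1") (auto intro!: add_pos_nonneg add_nonneg_pos mult_pos_pos)
  qed
  then have "det (s *\<^sub>R A + (1 - s) *\<^sub>R mat 1) \<noteq> 0"
    using PD_invertible invertible_det_nz by blast
  then show False using s f_def by simp
qed



lemma mv_scaleR: "(A::real^'n^'m) *v (r *\<^sub>R v) = r *\<^sub>R (A *v v)"
  by (simp add: vec_eq_iff matrix_vector_mult_def sum_distrib_left mult.left_commute)

lemma core:
  fixes A :: "real^'n^'n" and k y :: "real^'n"
  assumes pd: "PD A" and sy: "symm A" and a: "a > 0"
    and cq: "c > k \<bullet> (matrix_inv A *v k)"
  shows "det (\<chi> i j. a * (A$i$j - k$i * k$j / c)) =
           a ^ CARD('n) * det A * ((c - k \<bullet> (matrix_inv A *v k)) / c)"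
    and "y \<bullet> (matrix_inv (\<chi> i j. a * (A$i$j - k$i * k$j / c)) *v y) =
           (y \<bullet> (matrix_inv A *v y) + (k \<bullet> (matrix_inv A *v y))\<^sup>2 / (c - k \<bullet> (matrix_inv A *v k))) / a"
proof -
  define S where "S = (\<chi> i j. a * (A$i$j - k$i * k$j / c))"
  define w where "w = matrix_inv A *v k"
  define q where "q = k \<bullet> w"
  have inv: "invertible A" using PD_invertible[OF pd] .
  have Aw: "A *v w = k" using inv_vec(1)[OF inv] w_def by simp
  have q0: "0 \<le> q" unfolding q_def using Aw PD_quad_nonneg[OF pd, of w]
    by (metis inner_commute)
  have cq': "q < c" using cq q_def w_def by simp
  have c0: "0 < c" using q0 cq' by simp
  define u where "u = (- 1 / c) *\<^sub>R k"
  have Souter: "S = (a *\<^sub>R A) ** (mat 1 + (\<chi> i j. w$i * u$j))"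
  proof -
    have "(A ** (\<chi> i j. w$i * u$j)) = (\<chi> i j. (A *v w)$i * u$j)"
      by (auto simp: vec_eq_iff matrix_matrix_mult_def matrix_vector_mult_def sum_distrib_right mult.assoc)
    then show ?thesis
      by (auto simp: S_def Aw u_def vec_eq_iff matrix_add_ldistrib field_simps
            simp flip: scalar_matrix_assoc)
  qed
  have "det S = a ^ CARD('n) * det A * (1 + u \<bullet> w)"
    unfolding Souter det_mul det_scaleR det_rank_one ..
  also have "1 + u \<bullet> w = (c - q) / c" using c0 by (simp add: u_def q_def field_simps)
  finally have dS: "det S = a ^ CARD('n) * det A * ((c - q) / c)" .
  then show "det S = a ^ CARD('n) * det A * ((c - k \<bullet> (matrix_inv A *v k)) / c)"
    using q_def w_def by simp
  have Sv: "S *v x = a *\<^sub>R (A *v x - ((k \<bullet> x) / c) *\<^sub>R k)" for x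
    by (auto simp: S_def vec_eq_iff matrix_vector_mult_def inner_vec_def sum_subtractf
          sum_distrib_left sum_divide_distrib field_simps)
  define \<beta> where "\<beta> = (w \<bullet> y) / (c - q)"
  define z where "z = (1 / a) *\<^sub>R (matrix_inv A *v y + \<beta> *\<^sub>R w)"
  have kAy: "k \<bullet> (matrix_inv A *v y) = w \<bullet> y"
    unfolding w_def by (rule symm_inv_dot[OF sy inv])
  have Az: "A *v z = (1 / a) *\<^sub>R (y + \<beta> *\<^sub>R k)"
    by (simp add: z_def matrix_vector_right_distrib inv_vec(1)[OF inv] Aw mv_scaleR)
  have kz: "k \<bullet> z = (1 / a) * (w \<bullet> y + \<beta> * q)"
    by (simp add: z_def inner_add_right kAy q_def)
  have bq: "\<beta> * (c - q) = w \<bullet> y" using cq' by (simp add: \<beta>_def)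
  have Sz: "S *v z = y"
  proof -
    have "S *v z = y + (\<beta> - (w \<bullet> y + \<beta> * q) / c) *\<^sub>R k"
      unfolding Sv Az kz using a by (simp add: algebra_simps)
    also have "\<beta> - (w \<bullet> y + \<beta> * q) / c = 0"
      using c0 bq by (simp add: field_simps)
    finally show ?thesis by simp
  qed
  have detS: "det S \<noteq> 0"
    using dS PD_det_pos[OF pd] a c0 cq' by simp
  then have invS: "invertible S" by (simp add: invertible_det_nz)
  have "matrix_inv S *v y = z" using inv_vec(2)[OF invS, of z] Sz by simp
  then have "y \<bullet> (matrix_inv S *v y) = (1 / a) * (y \<bullet> (matrix_inv A *v y) + \<beta> * (w \<bullet> y))"
    by (simp add: z_def inner_add_right inner_commute)
  also have "\<dots> = (y \<bullet> (matrix_inv A *v y) + (k \<bullet> (matrix_inv A *v y))\<^sup>2 / (c - q)) / a"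
    using kAy by (simp add: \<beta>_def power2_eq_square)
  finally show "y \<bullet> (matrix_inv (\<chi> i j. a * (A$i$j - k$i * k$j / c)) *v y) =
           (y \<bullet> (matrix_inv A *v y) + (k \<bullet> (matrix_inv A *v y))\<^sup>2 / (c - k \<bullet> (matrix_inv A *v k))) / a"
    using S_def q_def w_def by simp
qed



lemma pd2_pd1_sym:
  assumes "symmetric_kernel K" "x' \<in> {0..1}" "t \<in> {0..1}"
  shows "pd2 K x' t = pd1 K t x'"
proof -
  have eq: "\<And>s. s \<in> {0..1} \<Longrightarrow> K x' s = K s x'"
    using assms unfolding symmetric_kernel_def by auto
  have "((\<lambda>s. K x' s) has_real_derivative D) (at t within {0..1}) \<longleftrightarrow>
        ((\<lambda>s. K s x') has_real_derivative D) (at t within {0..1})" for D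
  proof
    assume "((\<lambda>s. K x' s) has_real_derivative D) (at t within {0..1})"
    then show "((\<lambda>s. K s x') has_real_derivative D) (at t within {0..1})"
      by (rule has_field_derivative_transform_within[where d=1]) (use assms eq in auto)
  next
    assume "((\<lambda>s. K s x') has_real_derivative D) (at t within {0..1})"
    then show "((\<lambda>s. K x' s) has_real_derivative D) (at t within {0..1})"
      by (rule has_field_derivative_transform_within[where d=1]) (use assms eq in auto)
  qed
  then show ?thesis unfolding pd1_def pd2_def by simp
qed

lemma gram_nonneg:
  fixes X :: "real^'n"
  assumes "\<forall>i. X$i \<in> {0..1}" "pos_def_kernel K"
  shows "0 \<le> x \<bullet> (gram K X *v x)"
proof -
  obtain h where h: "bij_betw h {0..<CARD('n)} (UNIV::'n set)"
    using ex_bij_betw_nat_finite[of "UNIV::'n set"] by auto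
  have "x \<bullet> (gram K X *v x) = (\<Sum>i\<in>UNIV. \<Sum>j\<in>UNIV. x$i * x$j * K (X$i) (X$j))"
    by (simp add: inner_vec_def gram_def matrix_vector_mult_def sum_distrib_left mult_ac)
  also have "\<dots> = (\<Sum>i<CARD('n). \<Sum>j<CARD('n). x$(h i) * x$(h j) * K (X$(h i)) (X$(h j)))"
  proof -
    have "(\<Sum>i<CARD('n). \<Sum>j<CARD('n). x$(h i) * x$(h j) * K (X$(h i)) (X$(h j)))
        = (\<Sum>i<CARD('n). \<Sum>j\<in>UNIV. x$(h i) * x$j * K (X$(h i)) (X$j))"
      unfolding lessThan_atLeast0
      by (rule sum.cong[OF refl], rule sum.reindex_bij_betw[OF h, where g="\<lambda>j. x$(h _) * x$j * K (X$(h _)) (X$j)"])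
    also have "\<dots> = (\<Sum>i\<in>UNIV. \<Sum>j\<in>UNIV. x$i * x$j * K (X$i) (X$j))"
      unfolding lessThan_atLeast0
      by (rule sum.reindex_bij_betw[OF h, where g="\<lambda>i. \<Sum>j\<in>UNIV. x$i * x$j * K (X$i) (X$j)"])
    finally show ?thesis by simp
  qed
  also have "0 \<le> \<dots>"
    using assms unfolding pos_def_kernel_def by auto
  finally show ?thesis .
qed

lemma regmat_PD:
  fixes X :: "real^'n"
  assumes "\<forall>i. X$i \<in> {0..1}" "pos_def_kernel K" "lam > 0"
  shows "PD (regmat K lam X)"
  unfolding PD_def
proof (intro allI impI)
  fix x :: "real^'n" assume "x \<noteq> 0"
  have "x \<bullet> (regmat K lam X *v x) = x \<bullet> (gram K X *v x) + (real CARD('n) * lam) * (x \<bullet> x)"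
    by (simp add: regmat_def matrix_vector_mult_add_rdistrib inner_add_right
         flip: scaleR_matrix_vector_assoc)
  moreover have "0 < (real CARD('n) * lam) * (x \<bullet> x)" using assms \<open>x \<noteq> 0\<close> by simp
  ultimately show "0 < x \<bullet> (regmat K lam X *v x)" using gram_nonneg[OF assms(1,2), of x] by linarith
qed

lemma regmat_symm:
  fixes X :: "real^'n"
  assumes "\<forall>i. X$i \<in> {0..1}" "symmetric_kernel K"
  shows "symm (regmat K lam X)"
  using assms unfolding symm_def regmat_def gram_def symmetric_kernel_def by (auto simp: mat_def)



theorem proposition1:
  fixes K :: "real \<Rightarrow> real \<Rightarrow> real"
    and \<sigma> lam :: real
    and X y :: "real^'n"
    and \<pi> :: "real \<Rightarrow> real"
  assumes "\<sigma> > 0" and "lam > 0"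
    and "\<forall>i. X$i \<in> {0..1}"
    and "symmetric_kernel K" and "pos_def_kernel K" and "C2_square K"
    and "\<forall>x\<in>{0..1}. sigma2_hat K \<sigma> lam X x > 0"
    and "\<forall>t\<in>{0..1}. \<pi> t \<ge> 0" and "(\<pi> has_integral 1) {0..1}"
  shows "(\<exists>C>0. \<forall>t\<in>{0..1}. marg_lik K \<sigma> lam X y t =
            C * (1 / sqrt (sigma2_hat K \<sigma> lam X t / K11 K t t)) *
              exp (- (mu_hat K lam X y t)\<^sup>2 / (2 * sigma2_hat K \<sigma> lam X t)))
       \<and> (\<exists>C. \<forall>t\<in>{0..1}. posterior K \<sigma> lam X y \<pi> t =
            C * (1 / sqrt (sigma2_hat K \<sigma> lam X t / K11 K t t)) *
              exp (- (mu_hat K lam X y t)\<^sup>2 / (2 * sigma2_hat K \<sigma> lam X t)) * \<pi> t)"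
proof -
  define A where "A = regmat K lam X"
  define a where "a = \<sigma>\<^sup>2 / (real CARD('n) * lam)"
  define N where "N = real CARD('n)"
  have a0: "a > 0" using assms(1,2) by (simp add: a_def)
  have aN: "a * (N * lam) = \<sigma>\<^sup>2" using assms(2) by (simp add: a_def N_def)
  have pd: "PD A" unfolding A_def by (rule regmat_PD[OF assms(3,5,2)])
  have sy: "symm A" unfolding A_def by (rule regmat_symm[OF assms(3,4)])
  define P where "P = (2 * pi) ^ CARD('n) * (a ^ CARD('n) * det A / a)"
  define C where "C = exp (- (y \<bullet> (matrix_inv A *v y)) / (2 * a)) / sqrt P"
  have P0: "P > 0" using PD_det_pos[OF pd] a0 by (simp add: P_def)
  have C0: "C > 0" using P0 by (simp add: C_def)
  have main: "marg_lik K \<sigma> lam X y t =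
            C * (1 / sqrt (sigma2_hat K \<sigma> lam X t / K11 K t t)) *
              exp (- (mu_hat K lam X y t)\<^sup>2 / (2 * sigma2_hat K \<sigma> lam X t))"
    if t: "t \<in> {0..1}" for t
  proof -
    define k where "k = K10_vec K t X"
    define c where "c = K11 K t t"
    define q where "q = k \<bullet> (matrix_inv A *v k)"
    define m where "m = k \<bullet> (matrix_inv A *v y)"
    have s2: "sigma2_hat K \<sigma> lam X t = a * (c - q)"
      by (simp add: sigma2_hat_def a_def A_def k_def c_def q_def)
    have mu: "mu_hat K lam X y t = m"
      by (simp add: mu_hat_def A_def k_def m_def)
    have cq: "c > q" using assms(7) t s2 a0 by (metis diff_gt_0_iff_gt zero_less_mult_pos)
    have q0: "0 \<le> q"
    proof -
      have "k = A *v (matrix_inv A *v k)" using inv_vec(1)[OF PD_invertible[OF pd]] by simp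
      then have "q = (matrix_inv A *v k) \<bullet> (A *v (matrix_inv A *v k))"
        unfolding q_def by (metis inner_commute)
      then show ?thesis using PD_quad_nonneg[OF pd] by simp
    qed
    have c0: "c > 0" using q0 cq by simp
    have Sig: "Sigma_t K \<sigma> lam X t = (\<chi> i j. a * (A$i$j - k$i * k$j / c))"
    proof -
      have kk: "K01 K (X$i) t = k$i" "K10 K t (X$i) = k$i" for i
        using pd2_pd1_sym[OF assms(4) _ t, of "X$i"] assms(3) by (auto simp: k_def K10_vec_def)
      show ?thesis
        unfolding Sigma_t_def kk using assms(2) c0
        by (auto simp: vec_eq_iff A_def regmat_def gram_def mat_def a_def c_def[symmetric] field_simps)
    qed
    have dS: "det (Sigma_t K \<sigma> lam X t) = a ^ CARD('n) * det A * ((c - q) / c)"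
      unfolding Sig q_def by (rule core(1)[OF pd sy a0 cq[unfolded q_def]])
    have qS: "y \<bullet> (matrix_inv (Sigma_t K \<sigma> lam X t) *v y) = (y \<bullet> (matrix_inv A *v y) + m\<^sup>2 / (c - q)) / a"
      unfolding Sig q_def m_def by (rule core(2)[OF pd sy a0 cq[unfolded q_def]])
    have "(2 * pi) ^ CARD('n) * det (Sigma_t K \<sigma> lam X t) = P * (a * (c - q) / c)"
      unfolding dS P_def using a0 c0 by (simp add: field_simps)
    then have sq: "sqrt ((2 * pi) ^ CARD('n) * det (Sigma_t K \<sigma> lam X t)) = sqrt P * sqrt (a * (c - q) / c)"
      by (simp only: real_sqrt_mult)
    have ex: "- (y \<bullet> (matrix_inv (Sigma_t K \<sigma> lam X t) *v y)) / 2
        = - (y \<bullet> (matrix_inv A *v y)) / (2 * a) + (- m\<^sup>2 / (2 * (a * (c - q))))"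
      unfolding qS using a0 cq by (simp add: field_simps)
    show ?thesis
      unfolding marg_lik_def mvn_density_def sq ex s2 mu exp_add C_def c_def[symmetric]
      by simp
  qed
  show ?thesis
  proof
    show "\<exists>C>0. \<forall>t\<in>{0..1}. marg_lik K \<sigma> lam X y t =
            C * (1 / sqrt (sigma2_hat K \<sigma> lam X t / K11 K t t)) *
              exp (- (mu_hat K lam X y t)\<^sup>2 / (2 * sigma2_hat K \<sigma> lam X t))"
      using main C0 by blast
    define I where "I = integral {0..1} (\<lambda>s. marg_lik K \<sigma> lam X y s * \<pi> s)"
    show "\<exists>C. \<forall>t\<in>{0..1}. posterior K \<sigma> lam X y \<pi> t =
            C * (1 / sqrt (sigma2_hat K \<sigma> lam X t / K11 K t t)) *
              exp (- (mu_hat K lam X y t)\<^sup>2 / (2 * sigma2_hat K \<sigma> lam X t)) * \<pi> t"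
    proof (intro exI ballI)
      fix t :: real assume "t \<in> {0..1}"
      show "posterior K \<sigma> lam X y \<pi> t = (C / I) * (1 / sqrt (sigma2_hat K \<sigma> lam X t / K11 K t t)) *
              exp (- (mu_hat K lam X y t)\<^sup>2 / (2 * sigma2_hat K \<sigma> lam X t)) * \<pi> t"
        unfolding posterior_def I_def[symmetric] main[OF \<open>t \<in> {0..1}\<close>] by simp
    qed
  qed
qed


end
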